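(* Let $M$ be a model of $PA^-$ of cardinality $\aleph_1$ which is Diophantine correct (i.e. $M$ satisfies every universal LA-sentence true in $\mathbb{N}$), and let $D$ be a regular filter on $\omega$. Then $M$ can be embedded (as an LA-structure) into the reduced power $\mathbb{N}^{\omega}/D$.
   Context: LA is the first-order language with non-logical symbols $+,\cdot,0,1,\leq$; $\mathbb{N}$ is the standard LA-structure. $PA^-$ is the theory of nonnegative parts of discretely ordered rings, axiomatized by: associativity and commutativity of $+$ and $\cdot$; distributivity $x\cdot(y+z)=x\cdot y+x\cdot z$; $x+0=x$, $x\cdot 0=0$, $x\cdot 1=x$; $\leq$ is a reflexive linear order with $<$ transitive and $x<y\vee x=y\vee y<x$ (where $x<y$ abbreviates $x\le y\wedge x\ne y$); $x<y\to x+z<y+z$; $0<z\wedge x<y\to x\cdot z<y\cdot z$; $x<y\to\exists z(x+z=y)$; $0<1$ and $x>0\to x\geq 1$; $x\geq 0$. A filter $D$ on $\omega$ is regular if there is a family $\{A_n\}_{n\in\omega}\subseteq D$ such that every element of $\omega$ belongs to only finitely many $A_n$. The reduced power $\mathbb{N}^\omega/D$ has as elements the classes of functions $f:\omega\to\mathbb{N}$ modulo $f\sim g$ iff $\{n: f(n)=g(n)\}\in D$, with $+,\cdot$ defined pointwise, $0,1$ the classes of constant functions, and $[f]\le[g]$ iff $\{n:f(n)\le g(n)\}\in D$. An embedding is an injective map preserving $0,1,+,\cdot$ and $\leq$. *)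

theory Defs
  imports Main
begin

record 'a la_struct =
  carrier :: "'a set"
  add :: "'a \<Rightarrow> 'a \<Rightarrow> 'a"
  mul :: "'a \<Rightarrow> 'a \<Rightarrow> 'a"
  zero :: 'a
  one :: 'a
  le :: "'a \<Rightarrow> 'a \<Rightarrow> bool"

definition lt :: "('a, 'b) la_struct_scheme \<Rightarrow> 'a \<Rightarrow> 'a \<Rightarrow> bool" where
  "lt M x y \<longleftrightarrow> le M x y \<and> x \<noteq> y"

definition Nat_struct :: "nat la_struct" where
  "Nat_struct = \<lparr>carrier = UNIV, add = (+), mul = (*), zero = 0, one = 1, le = (\<le>)\<rparr>"

definition PA_minus_model :: "('a, 'b) la_struct_scheme \<Rightarrow> bool" where
  "PA_minus_model M \<longleftrightarrow>
     zero M \<in> carrier M \<and> one M \<in> carrier M \<and>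
     (\<forall>x\<in>carrier M. \<forall>y\<in>carrier M. add M x y \<in> carrier M \<and> mul M x y \<in> carrier M) \<and>
     (\<forall>x\<in>carrier M. \<forall>y\<in>carrier M. \<forall>z\<in>carrier M.
        add M (add M x y) z = add M x (add M y z) \<and>
        mul M (mul M x y) z = mul M x (mul M y z) \<and>
        mul M x (add M y z) = add M (mul M x y) (mul M x z)) \<and>
     (\<forall>x\<in>carrier M. \<forall>y\<in>carrier M. add M x y = add M y x \<and> mul M x y = mul M y x) \<and>
     (\<forall>x\<in>carrier M. add M x (zero M) = x \<and> mul M x (zero M) = zero M \<and> mul M x (one M) = x) \<and>
     (\<forall>x\<in>carrier M. le M x x) \<and>
     (\<forall>x\<in>carrier M. \<forall>y\<in>carrier M. \<forall>z\<in>carrier M. lt M x y \<and> lt M y z \<longrightarrow> lt M x z) \<and>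
     (\<forall>x\<in>carrier M. \<forall>y\<in>carrier M. lt M x y \<or> x = y \<or> lt M y x) \<and>
     (\<forall>x\<in>carrier M. \<forall>y\<in>carrier M. \<forall>z\<in>carrier M. lt M x y \<longrightarrow> lt M (add M x z) (add M y z)) \<and>
     (\<forall>x\<in>carrier M. \<forall>y\<in>carrier M. \<forall>z\<in>carrier M.
        lt M (zero M) z \<and> lt M x y \<longrightarrow> lt M (mul M x z) (mul M y z)) \<and>
     (\<forall>x\<in>carrier M. \<forall>y\<in>carrier M. lt M x y \<longrightarrow> (\<exists>z\<in>carrier M. add M x z = y)) \<and>
     lt M (zero M) (one M) \<and>
     (\<forall>x\<in>carrier M. lt M (zero M) x \<longrightarrow> le M (one M) x) \<and>
     (\<forall>x\<in>carrier M. le M (zero M) x)"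

datatype la_term = Var nat | Zero | One | Plus la_term la_term | Times la_term la_term

datatype la_form =
    Eq la_term la_term
  | Le la_term la_term
  | FFalse
  | Neg la_form
  | Conj la_form la_form
  | Disj la_form la_form
  | Imp la_form la_form
  | All nat la_form
  | Ex nat la_form

fun tvars :: "la_term \<Rightarrow> nat set" where
  "tvars (Var i) = {i}"
| "tvars Zero = {}"
| "tvars One = {}"
| "tvars (Plus s t) = tvars s \<union> tvars t"
| "tvars (Times s t) = tvars s \<union> tvars t"

fun fvars :: "la_form \<Rightarrow> nat set" where
  "fvars (Eq s t) = tvars s \<union> tvars t"
| "fvars (Le s t) = tvars s \<union> tvars t"
| "fvars FFalse = {}"
| "fvars (Neg p) = fvars p"
| "fvars (Conj p q) = fvars p \<union> fvars q"
| "fvars (Disj p q) = fvars p \<union> fvars q"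
| "fvars (Imp p q) = fvars p \<union> fvars q"
| "fvars (All x p) = fvars p - {x}"
| "fvars (Ex x p) = fvars p - {x}"

fun teval :: "('a, 'b) la_struct_scheme \<Rightarrow> (nat \<Rightarrow> 'a) \<Rightarrow> la_term \<Rightarrow> 'a" where
  "teval M e (Var i) = e i"
| "teval M e Zero = zero M"
| "teval M e One = one M"
| "teval M e (Plus s t) = add M (teval M e s) (teval M e t)"
| "teval M e (Times s t) = mul M (teval M e s) (teval M e t)"

fun sat :: "('a, 'b) la_struct_scheme \<Rightarrow> (nat \<Rightarrow> 'a) \<Rightarrow> la_form \<Rightarrow> bool" where
  "sat M e (Eq s t) = (teval M e s = teval M e t)"
| "sat M e (Le s t) = le M (teval M e s) (teval M e t)"
| "sat M e FFalse = False"
| "sat M e (Neg p) = (\<not> sat M e p)"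
| "sat M e (Conj p q) = (sat M e p \<and> sat M e q)"
| "sat M e (Disj p q) = (sat M e p \<or> sat M e q)"
| "sat M e (Imp p q) = (sat M e p \<longrightarrow> sat M e q)"
| "sat M e (All x p) = (\<forall>a\<in>carrier M. sat M (e(x := a)) p)"
| "sat M e (Ex x p) = (\<exists>a\<in>carrier M. sat M (e(x := a)) p)"

definition true_in :: "('a, 'b) la_struct_scheme \<Rightarrow> la_form \<Rightarrow> bool" where
  "true_in M p \<longleftrightarrow> (\<forall>e. (\<forall>i. e i \<in> carrier M) \<longrightarrow> sat M e p)"

fun qfree :: "la_form \<Rightarrow> bool" where
  "qfree (All x p) = False"
| "qfree (Ex x p) = False"
| "qfree (Neg p) = qfree p"
| "qfree (Conj p q) = (qfree p \<and> qfree q)"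
| "qfree (Disj p q) = (qfree p \<and> qfree q)"
| "qfree (Imp p q) = (qfree p \<and> qfree q)"
| "qfree _ = True"

fun universal :: "la_form \<Rightarrow> bool" where
  "universal (All x p) = universal p"
| "universal p = qfree p"

definition universal_sentence :: "la_form \<Rightarrow> bool" where
  "universal_sentence p \<longleftrightarrow> universal p \<and> fvars p = {}"

definition diophantine_correct :: "('a, 'b) la_struct_scheme \<Rightarrow> bool" where
  "diophantine_correct M \<longleftrightarrow>
     (\<forall>p. universal_sentence p \<and> true_in Nat_struct p \<longrightarrow> true_in M p)"

definition has_card_aleph1 :: "'a set \<Rightarrow> bool" where
  "has_card_aleph1 A \<longleftrightarrow> ordIso2 (card_of A) (cardSuc natLeq)"

definition is_filter :: "nat set set \<Rightarrow> bool" where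
  "is_filter D \<longleftrightarrow> UNIV \<in> D \<and> {} \<notin> D \<and>
     (\<forall>A\<in>D. \<forall>B\<in>D. A \<inter> B \<in> D) \<and>
     (\<forall>A B. A \<in> D \<and> A \<subseteq> B \<longrightarrow> B \<in> D)"

definition regular_filter :: "nat set set \<Rightarrow> bool" where
  "regular_filter D \<longleftrightarrow> is_filter D \<and>
     (\<exists>A :: nat \<Rightarrow> nat set. (\<forall>n. A n \<in> D) \<and> (\<forall>i. finite {n. i \<in> A n}))"

text \<open>Elements of the reduced power N^omega/D are the classes of the relation rp_eq D;
  its operations are pointwise, so the operations on classes are induced by those below.\<close>
definition rp_eq :: "nat set set \<Rightarrow> (nat \<Rightarrow> nat) \<Rightarrow> (nat \<Rightarrow> nat) \<Rightarrow> bool" where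
  "rp_eq D f g \<longleftrightarrow> {n. f n = g n} \<in> D"

definition rp_le :: "nat set set \<Rightarrow> (nat \<Rightarrow> nat) \<Rightarrow> (nat \<Rightarrow> nat) \<Rightarrow> bool" where
  "rp_le D f g \<longleftrightarrow> {n. f n \<le> g n} \<in> D"

text \<open>h picks a representative of the class [h x]; the induced map x \<mapsto> [h x] into
  N^omega/D is an embedding of LA-structures.\<close>
definition embeds_into_reduced_power ::
    "('a, 'b) la_struct_scheme \<Rightarrow> nat set set \<Rightarrow> ('a \<Rightarrow> nat \<Rightarrow> nat) \<Rightarrow> bool" where
  "embeds_into_reduced_power M D h \<longleftrightarrow>
     (\<forall>x\<in>carrier M. \<forall>y\<in>carrier M. rp_eq D (h x) (h y) \<longrightarrow> x = y) \<and>
     rp_eq D (h (zero M)) (\<lambda>n. 0) \<and>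
     rp_eq D (h (one M)) (\<lambda>n. 1) \<and>
     (\<forall>x\<in>carrier M. \<forall>y\<in>carrier M.
        rp_eq D (h (add M x y)) (\<lambda>n. h x n + h y n) \<and>
        rp_eq D (h (mul M x y)) (\<lambda>n. h x n * h y n) \<and>
        (le M x y \<longleftrightarrow> rp_le D (h x) (h y)))"

end

theory Submission imports Defs "HOL-Library.Countable_Set_Type" "HOL-Library.Countable" begin

instance la_term :: countable by countable_datatype
instance la_form :: countable by countable_datatype

lemma underS_countable:
  assumes "has_card_aleph1 A" "a \<in> A"
  shows "countable (underS (card_of A) a)"
proof -
  include cardinal_syntax
  have "card_of (underS (card_of A) a) <o card_of A" using card_of_underS[of "card_of A" a] assms(2) by (simp add: card_of_Card_order Field_card_of card_of_card_order_on)
  hence "card_of (underS (card_of A) a) <o cardSuc natLeq" using assms(1) unfolding has_card_aleph1_def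
    using ordLess_ordIso_trans by blast
  hence "card_of (underS (card_of A) a) \<le>o natLeq" using cardSuc_ordLeq_ordLess natLeq_Card_order card_of_Card_order by blast
  thus ?thesis using countable_card_le_natLeq by blast
qed

fun trename :: "(nat \<Rightarrow> nat) \<Rightarrow> la_term \<Rightarrow> la_term" where
  "trename r (Var i) = Var (r i)"
| "trename r Zero = Zero"
| "trename r One = One"
| "trename r (Plus s t) = Plus (trename r s) (trename r t)"
| "trename r (Times s t) = Times (trename r s) (trename r t)"

fun frename :: "(nat \<Rightarrow> nat) \<Rightarrow> la_form \<Rightarrow> la_form" where
  "frename r (Eq s t) = Eq (trename r s) (trename r t)"
| "frename r (Le s t) = Le (trename r s) (trename r t)"
| "frename r FFalse = FFalse"
| "frename r (Neg p) = Neg (frename r p)"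
| "frename r (Conj p q) = Conj (frename r p) (frename r q)"
| "frename r (Disj p q) = Disj (frename r p) (frename r q)"
| "frename r (Imp p q) = Imp (frename r p) (frename r q)"
| "frename r (All x p) = All x p"
| "frename r (Ex x p) = Ex x p"

lemma teval_rename: "teval M e (trename r t) = teval M (e \<circ> r) t"
  by (induction t) auto

lemma sat_rename: "qfree p \<Longrightarrow> sat M e (frename r p) = sat M (e \<circ> r) p"
  by (induction p) (auto simp: teval_rename)

lemma qfree_rename: "qfree p \<Longrightarrow> qfree (frename r p)"
  by (induction p) auto

lemma finite_tvars: "finite (tvars t)" by (induction t) auto
lemma finite_fvars: "finite (fvars p)" by (induction p) (auto simp: finite_tvars)

lemma fvars_closure: "fvars (foldr All vs p) = fvars p - set vs" by (induction vs) auto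
lemma universal_closure: "universal (foldr All vs p) = universal p" by (induction vs) auto

lemma sat_closure_inst: "sat M e (foldr All vs p) \<Longrightarrow> \<forall>v. e v \<in> carrier M \<Longrightarrow> sat M e p"
proof (induction vs arbitrary: e)
  case Nil then show ?case by simp
next
  case (Cons x vs)
  have "e x \<in> carrier M" using Cons.prems(2) by blast
  moreover have "\<forall>a\<in>carrier M. sat M (e(x:=a)) (foldr All vs p)" using Cons.prems(1) by simp
  ultimately have "sat M (e(x := e x)) (foldr All vs p)" by blast
  then have "sat M e (foldr All vs p)" by simp
  then show ?case using Cons by simp
qed

lemma sat_closure_N: "\<not> sat Nat_struct e (foldr All vs (Neg p)) \<Longrightarrow> \<exists>e'. sat Nat_struct e' p"
  by (induction vs arbitrary: e) (auto simp: Nat_struct_def)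

lemma dioph_exists:
  assumes "diophantine_correct M" "qfree \<theta>" "\<forall>v. e v \<in> carrier M" "sat M e \<theta>"
  shows "\<exists>e'. sat Nat_struct e' \<theta>"
proof (rule ccontr)
  assume nex: "\<not> ?thesis"
  let ?s = "foldr All (sorted_list_of_set (fvars \<theta>)) (Neg \<theta>)"
  have us: "universal_sentence ?s" unfolding universal_sentence_def
    using fvars_closure universal_closure finite_fvars assms(2) by simp
  have "true_in Nat_struct ?s" unfolding true_in_def using sat_closure_N nex by blast
  hence "true_in M ?s" using assms(1) us unfolding diophantine_correct_def by blast
  hence "sat M e ?s" using assms(3) true_in_def by blast
  hence "sat M e (Neg \<theta>)" using sat_closure_inst assms(3) by blast
  thus False using assms(4) by simp
qed

lemma sat_bigconj: "sat X e (foldr (\<lambda>k \<phi>. Conj (f k) \<phi>) ks (Eq Zero Zero)) \<longleftrightarrow> (\<forall>k\<in>set ks. sat X e (f k))"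
  by (induction ks) auto

lemma qfree_bigconj: "(\<forall>k\<in>set ks. qfree (f k)) \<Longrightarrow> qfree (foldr (\<lambda>k \<phi>. Conj (f k) \<phi>) ks (Eq Zero Zero))"
  by (induction ks) auto

lemma filter_mono: "is_filter D \<Longrightarrow> X \<in> D \<Longrightarrow> X \<subseteq> Z \<Longrightarrow> Z \<in> D"
  unfolding is_filter_def by blast

lemma filter_int: "is_filter D \<Longrightarrow> X \<in> D \<Longrightarrow> Y \<in> D \<Longrightarrow> X \<inter> Y \<subseteq> Z \<Longrightarrow> Z \<in> D"
  unfolding is_filter_def by blast

definition good :: "'a la_struct \<Rightarrow> nat set set \<Rightarrow> ('a \<times> (nat \<Rightarrow> nat)) set \<Rightarrow> bool" where
  "good M D F \<longleftrightarrow> (\<forall>\<theta> e P. qfree \<theta> \<longrightarrow> finite P \<longrightarrow> (\<forall>v. e v \<in> carrier M) \<longrightarrow> e ` P \<subseteq> Domain F \<longrightarrow>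
     sat M e \<theta> \<longrightarrow> {i. \<exists>g. (\<forall>v\<in>P. (e v, g v) \<in> F) \<and> sat Nat_struct (\<lambda>v. g v i) \<theta>} \<in> D)"

lemma good_empty:
  assumes "diophantine_correct M" "is_filter D"
  shows "good M D {}"
  unfolding good_def
proof (intro allI impI)
  fix \<theta> e P assume a: "qfree \<theta>" "finite (P::nat set)" "\<forall>v. e v \<in> carrier M" "e ` P \<subseteq> Domain ({}::('a \<times> (nat \<Rightarrow> nat)) set)" "sat M e \<theta>"
  then have P: "P = {}" by auto
  obtain e' where e': "sat Nat_struct e' \<theta>" using dioph_exists[OF assms(1) a(1,3,5)] by blast
  have "{i. \<exists>g. (\<forall>v\<in>P. (e v, g v) \<in> ({}::('a \<times> (nat \<Rightarrow> nat)) set)) \<and> sat Nat_struct (\<lambda>v. g v i) \<theta>} = UNIV"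
    using P e' by (auto intro!: exI[of _ "\<lambda>v _. e' v"])
  then show "{i. \<exists>g. (\<forall>v\<in>P. (e v, g v) \<in> ({}::('a \<times> (nat \<Rightarrow> nat)) set)) \<and> sat Nat_struct (\<lambda>v. g v i) \<theta>} \<in> D"
    using assms(2) unfolding is_filter_def by simp
qed

lemma good_chain:
  assumes "is_filter D" "C \<noteq> {}" "chain\<^sub>\<subseteq> C" "\<forall>F\<in>C. good M D F"
  shows "good M D (\<Union>C)"
  unfolding good_def
proof (intro allI impI)
  fix \<theta> e P assume a: "qfree \<theta>" "finite (P::nat set)" "\<forall>v. e v \<in> carrier M" "e ` P \<subseteq> Domain (\<Union>C)" "sat M e \<theta>"
  define Q where "Q = (\<lambda>v. (e v, SOME y. (e v, y) \<in> \<Union>C)) ` P"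
  have Qf: "finite Q" using a(2) Q_def by simp
  have QC: "Q \<subseteq> \<Union>C"
  proof
    fix q assume "q \<in> Q"
    then obtain v where v: "v \<in> P" "q = (e v, SOME y. (e v, y) \<in> \<Union>C)" using Q_def by blast
    then have "\<exists>y. (e v, y) \<in> \<Union>C" using a(4) by blast
    then show "q \<in> \<Union>C" using v(2) by (metis someI_ex)
  qed
  obtain B where B: "B \<in> C" "Q \<subseteq> B"
    using finite_subset_Union_chain[OF Qf QC assms(2)] assms(3) chain_subset_alt_def by metis
  have "e ` P \<subseteq> Domain B"
  proof
    fix x assume "x \<in> e ` P"
    then obtain v where "v \<in> P" "x = e v" by blast
    then have "(x, SOME y. (e v, y) \<in> \<Union>C) \<in> B" using B(2) Q_def by blast
    then show "x \<in> Domain B" by blast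
  qed
  then have "{i. \<exists>g. (\<forall>v\<in>P. (e v, g v) \<in> B) \<and> sat Nat_struct (\<lambda>v. g v i) \<theta>} \<in> D"
    using assms(4) B(1) a unfolding good_def by blast
  moreover have "{i. \<exists>g. (\<forall>v\<in>P. (e v, g v) \<in> B) \<and> sat Nat_struct (\<lambda>v. g v i) \<theta>}
     \<subseteq> {i. \<exists>g. (\<forall>v\<in>P. (e v, g v) \<in> \<Union>C) \<and> sat Nat_struct (\<lambda>v. g v i) \<theta>}"
    using B(1) by blast
  ultimately show "{i. \<exists>g. (\<forall>v\<in>P. (e v, g v) \<in> \<Union>C) \<and> sat Nat_struct (\<lambda>v. g v i) \<theta>} \<in> D"
    using filter_mono assms(1) by blast
qed


lemma good_extend:
  assumes gd: "good M D F" and reg: "regular_filter D" and cnt: "countable (Domain F)"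
    and aM: "a \<in> carrier M"
  shows "\<exists>f. good M D (insert (a,f) F)"
proof -
  let ?N = "Nat_struct"
  obtain A :: "nat \<Rightarrow> nat set" where A: "\<forall>n. A n \<in> D" "\<forall>i. finite {n. i \<in> A n}" and fil: "is_filter D"
    using reg unfolding regular_filter_def by blast
  define T where "T = insert a (Domain F)"
  have Tc: "countable T" using cnt T_def by simp
  define valid where "valid = (\<lambda>(\<theta>::la_form, l::(nat \<times> 'a) list). qfree \<theta> \<and>
     (\<exists>e. (\<forall>v. e v \<in> carrier M) \<and> (\<forall>(v,c)\<in>set l. e v = c) \<and> sat M e \<theta>))"
  define K where "K = {k \<in> UNIV \<times> lists (UNIV \<times> T). valid k}"
  have Kc: "countable K" unfolding K_def
    by (rule countable_subset[of _ "UNIV \<times> lists (UNIV \<times> T)"]) (auto simp: Tc)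
  have Kne: "(Eq Zero Zero, []) \<in> K" unfolding K_def valid_def using aM
    by (auto intro!: exI[of _ "\<lambda>_. a"])
  define key where "key = from_nat_into K"
  have keyK: "key n \<in> K" for n unfolding key_def using Kne by (intro from_nat_into) blast
  have keysurj: "\<exists>n. key n = k" if "k \<in> K" for k using from_nat_into_surj[OF Kc that] key_def by blast
  define th where "th n = fst (key n)" for n
  define P where "P n = fst ` set (snd (key n))" for n
  define ee where "ee n = (SOME e. (\<forall>v. e v \<in> carrier M) \<and> (\<forall>(v,c)\<in>set (snd (key n)). e v = c) \<and> sat M e (th n))" for n
  have ee: "(\<forall>v. ee n v \<in> carrier M) \<and> (\<forall>(v,c)\<in>set (snd (key n)). ee n v = c) \<and> sat M (ee n) (th n)"
    and qf: "qfree (th n)" for n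
  proof -
    have "valid (key n)" using keyK[of n] K_def by blast
    then have "qfree (th n) \<and> (\<exists>e. (\<forall>v. e v \<in> carrier M) \<and> (\<forall>(v,c)\<in>set (snd (key n)). e v = c) \<and> sat M e (th n))"
      unfolding valid_def th_def by (cases "key n") auto
    then have ex: "\<exists>e. (\<forall>v. e v \<in> carrier M) \<and> (\<forall>(v,c)\<in>set (snd (key n)). e v = c) \<and> sat M e (th n)"
      and "qfree (th n)" by blast+
    then show "qfree (th n)" by blast
    show "(\<forall>v. ee n v \<in> carrier M) \<and> (\<forall>(v,c)\<in>set (snd (key n)). ee n v = c) \<and> sat M (ee n) (th n)"
      unfolding ee_def by (rule someI_ex[OF ex])
  qed
  have eeP: "ee n v \<in> T" if vP: "v \<in> P n" for n v
  proof -
    obtain c where c: "(v,c) \<in> set (snd (key n))" using vP P_def by force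
    have "snd (key n) \<in> lists (UNIV \<times> T)" using keyK[of n] K_def by auto
    then have "c \<in> T" using c by auto
    moreover have "ee n v = c" using ee[of n] c by auto
    ultimately show ?thesis by simp
  qed
  have Pfin: "finite (P n)" for n using P_def by simp
  define r where "r k v = (if v \<in> P k \<and> ee k v = a then 0 else Suc (prod_encode (k, v)))" for k v
  define Psi where "Psi n = foldr (\<lambda>k \<phi>. Conj (frename (r k) (th k)) \<phi>) [0..<Suc n] (Eq Zero Zero)" for n
  have qPsi: "qfree (Psi n)" for n unfolding Psi_def by (rule qfree_bigconj) (auto intro: qfree_rename qf)
  have satPsi: "sat X e (Psi n) \<longleftrightarrow> (\<forall>k\<le>n. sat X (e \<circ> r k) (th k))" for X :: "nat la_struct" and e n
    unfolding Psi_def sat_bigconj sat_rename[OF qf] by (auto simp del: upt_Suc)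
  have satPsiM: "sat M e (Psi n) \<longleftrightarrow> (\<forall>k\<le>n. sat M (e \<circ> r k) (th k))" for e n
    unfolding Psi_def sat_bigconj sat_rename[OF qf] by (auto simp del: upt_Suc)
  define E where "E w = (if w = 0 then a else (case prod_decode (w - 1) of (k, v) \<Rightarrow> ee k v))" for w
  have Er: "E \<circ> r k = ee k" for k
  proof
    fix v show "(E \<circ> r k) v = ee k v" by (auto simp: E_def r_def)
  qed
  have Ecar: "E w \<in> carrier M" for w using aM ee by (auto simp: E_def split: prod.split)
  define PP where "PP n = (\<lambda>(k,v). Suc (prod_encode (k,v))) ` (SIGMA k:{..n}. {v \<in> P k. ee k v \<noteq> a})" for n
  have PPf: "finite (PP n)" for n unfolding PP_def using Pfin by auto
  have EPP: "E ` PP n \<subseteq> Domain F" for n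
  proof
    fix x assume "x \<in> E ` PP n"
    then obtain k v where kv: "k \<le> n" "v \<in> P k" "ee k v \<noteq> a" "x = E (Suc (prod_encode (k,v)))"
      unfolding PP_def by auto
    then have "x = ee k v" by (simp add: E_def)
    then show "x \<in> Domain F" using eeP[OF kv(2)] kv(3) T_def by auto
  qed
  have sPsi: "sat M E (Psi n)" for n unfolding satPsiM Er using ee by auto
  define Y where "Y n = {i. \<exists>g. (\<forall>w\<in>PP n. (E w, g w) \<in> F) \<and> sat ?N (\<lambda>w. g w i) (Psi n)}" for n
  have YD: "Y n \<in> D" for n
  proof -
    show ?thesis unfolding Y_def using gd[unfolded good_def, rule_format, OF qPsi PPf Ecar EPP sPsi] .
  qed
  define J where "J i = {n. i \<in> A n \<and> i \<in> Y n}" for i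
  have Jf: "finite (J i)" for i unfolding J_def by (rule finite_subset[OF _ A(2)[rule_format, of i]]) auto
  define G where "G n i = (SOME g. (\<forall>w\<in>PP n. (E w, g w) \<in> F) \<and> sat ?N (\<lambda>w. g w i) (Psi n))" for n i
  define f where "f i = (if J i = {} then 0 else G (Max (J i)) i 0 i)" for i
  show ?thesis
  proof (rule exI[of _ f], unfold good_def, intro allI impI)
    fix \<theta> e Q assume a: "qfree \<theta>" "finite (Q::nat set)" "\<forall>v. e v \<in> carrier M"
      "e ` Q \<subseteq> Domain (insert (a,f) F)" "sat M e \<theta>"
    define l where "l = map (\<lambda>v. (v, e v)) (sorted_list_of_set Q)"
    have setl: "set l = (\<lambda>v. (v, e v)) ` Q" using a(2) l_def by simp
    have eT: "e v \<in> T" if vQ: "v \<in> Q" for v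
    proof -
      have "e v \<in> Domain (insert (a,f) F)" using a(4) vQ by blast
      then show ?thesis unfolding T_def by simp
    qed
    have lT: "set l \<subseteq> UNIV \<times> T" using eT setl by auto
    have "valid (\<theta>, l)" unfolding valid_def using a(1,3,5) setl by auto
    then have "(\<theta>, l) \<in> K" unfolding K_def using lT by auto
    then obtain n0 where n0: "key n0 = (\<theta>, l)" using keysurj by blast
    have thn0: "th n0 = \<theta>" using n0 th_def by simp
    have Pn0: "P n0 = Q" unfolding P_def n0 using setl by (simp add: image_image)
    have een0: "ee n0 v = e v" if vQ: "v \<in> Q" for v
    proof -
      have "(v, e v) \<in> set (snd (key n0))" using n0 setl vQ by simp
      then show ?thesis using ee[of n0] by fast
    qed
    have "A n0 \<inter> Y n0 \<subseteq> {i. \<exists>g. (\<forall>v\<in>Q. (e v, g v) \<in> insert (a,f) F) \<and> sat ?N (\<lambda>v. g v i) \<theta>}"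
    proof
      fix i assume i: "i \<in> A n0 \<inter> Y n0"
      then have n0J: "n0 \<in> J i" using J_def by simp
      define m where "m = Max (J i)"
      have mJ: "m \<in> J i" using n0J Jf m_def Max_in by blast
      have n0m: "n0 \<le> m" using n0J Jf m_def by simp
      have "i \<in> Y m" using mJ J_def by simp
      then have "\<exists>g. (\<forall>w\<in>PP m. (E w, g w) \<in> F) \<and> sat ?N (\<lambda>w. g w i) (Psi m)" using Y_def by simp
      then have g0: "(\<forall>w\<in>PP m. (E w, G m i w) \<in> F) \<and> sat ?N (\<lambda>w. G m i w i) (Psi m)"
        unfolding G_def by (rule someI_ex)
      have fi: "f i = G m i 0 i" using n0J m_def f_def by auto
      have s: "sat ?N ((\<lambda>w. G m i w i) \<circ> r n0) \<theta>" using g0 satPsi n0m thn0 by blast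
      define g where "g v = (if v \<in> Q \<and> e v = a then f else G m i (r n0 v))" for v
      have "\<forall>v\<in>Q. (e v, g v) \<in> insert (a,f) F"
      proof
        fix v assume v: "v \<in> Q"
        show "(e v, g v) \<in> insert (a,f) F"
        proof (cases "e v = a")
          case True then show ?thesis using v g_def by simp
        next
          case False
          have rv: "r n0 v = Suc (prod_encode (n0, v))" using False een0[OF v] r_def by simp
          have "r n0 v \<in> PP m" unfolding rv PP_def using n0m v Pn0 een0[OF v] False by force
          moreover have "E (r n0 v) = e v" using rv een0[OF v] E_def by simp
          ultimately show ?thesis using g0 g_def False by auto
        qed
      qed
      moreover have "(\<lambda>v. g v i) = (\<lambda>w. G m i w i) \<circ> r n0"
      proof
        fix v show "g v i = ((\<lambda>w. G m i w i) \<circ> r n0) v"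
          using fi een0 Pn0 by (auto simp: g_def r_def)
      qed
      ultimately show "i \<in> {i. \<exists>g. (\<forall>v\<in>Q. (e v, g v) \<in> insert (a,f) F) \<and> sat ?N (\<lambda>v. g v i) \<theta>}"
        using s by auto
    qed
    then show "{i. \<exists>g. (\<forall>v\<in>Q. (e v, g v) \<in> insert (a,f) F) \<and> sat ?N (\<lambda>v. g v i) \<theta>} \<in> D"
      using filter_int[OF fil A(1)[rule_format, of n0] YD[of n0]] by blast
  qed
qed


lemma good_fact:
  assumes gd: "good M D F" and sv: "single_valued F" and dom: "Domain F = carrier M" and fil: "is_filter D"
    and hF: "\<And>x. x \<in> carrier M \<Longrightarrow> (x, h x) \<in> F"
    and qf: "qfree \<theta>" and fin: "finite P" and ec: "\<forall>v. e v \<in> carrier M" and s: "sat M e \<theta>"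
    and imp: "\<And>i e'. (\<forall>v\<in>P. e' v = h (e v) i) \<Longrightarrow> sat Nat_struct e' \<theta> \<Longrightarrow> R i"
  shows "{i. R i} \<in> D"
proof -
  have "e ` P \<subseteq> Domain F" using ec dom by auto
  then have X: "{i. \<exists>g. (\<forall>v\<in>P. (e v, g v) \<in> F) \<and> sat Nat_struct (\<lambda>v. g v i) \<theta>} \<in> D"
    using gd qf fin ec s unfolding good_def by blast
  have "{i. \<exists>g. (\<forall>v\<in>P. (e v, g v) \<in> F) \<and> sat Nat_struct (\<lambda>v. g v i) \<theta>} \<subseteq> {i. R i}"
  proof
    fix i assume "i \<in> {i. \<exists>g. (\<forall>v\<in>P. (e v, g v) \<in> F) \<and> sat Nat_struct (\<lambda>v. g v i) \<theta>}"
    then obtain g where g: "\<forall>v\<in>P. (e v, g v) \<in> F" "sat Nat_struct (\<lambda>v. g v i) \<theta>" by blast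
    have "\<forall>v\<in>P. g v = h (e v)"
    proof
      fix v assume "v \<in> P"
      then have "(e v, g v) \<in> F" "(e v, h (e v)) \<in> F" using g(1) hF ec by auto
      then show "g v = h (e v)" using sv unfolding single_valued_def by blast
    qed
    then show "i \<in> {i. R i}" using imp[of "\<lambda>v. g v i" i] g(2) by auto
  qed
  then show ?thesis using filter_mono[OF fil X] by blast
qed

theorem theorem3:
  fixes M :: "'a la_struct" and D :: "nat set set"
  assumes "PA_minus_model M"
    and "has_card_aleph1 (carrier M)"
    and "diophantine_correct M"
    and "regular_filter D"
  shows "\<exists>h. embeds_into_reduced_power M D h"
proof -
  have fil: "is_filter D" using assms(4) regular_filter_def by blast
  define W where "W = card_of (carrier M)"
  have WO: "Well_order W" unfolding W_def by (rule card_of_Well_order)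
  have FW: "Field W = carrier M" unfolding W_def by (rule Field_card_of)
  define Fam where "Fam = {F. single_valued F \<and> Domain F \<subseteq> carrier M \<and>
      (\<forall>x\<in>Domain F. \<forall>y. (y,x) \<in> W \<longrightarrow> y \<in> Domain F) \<and> good M D F}"
  have "\<forall>C\<in>chains Fam. \<Union>C \<in> Fam"
  proof
    fix C assume C: "C \<in> chains Fam"
    show "\<Union>C \<in> Fam"
    proof (cases "C = {}")
      case True
      then show ?thesis using good_empty[OF assms(3) fil] unfolding Fam_def by simp
    next
      case False
      have ch: "chain\<^sub>\<subseteq> C" and CF: "C \<subseteq> Fam" using C unfolding chains_def by auto
      have "single_valued (\<Union>C)"
        unfolding single_valued_def
      proof (intro allI impI)
        fix x y z assume "(x,y) \<in> \<Union>C" "(x,z) \<in> \<Union>C"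
        then obtain F1 F2 where F: "F1 \<in> C" "F2 \<in> C" "(x,y) \<in> F1" "(x,z) \<in> F2" by blast
        then have "F1 \<subseteq> F2 \<or> F2 \<subseteq> F1" using ch unfolding chain_subset_def by blast
        moreover have "single_valued F1" "single_valued F2" using F CF Fam_def by auto
        ultimately show "y = z" using F unfolding single_valued_def by blast
      qed
      moreover have "Domain (\<Union>C) \<subseteq> carrier M" using CF Fam_def by blast
      moreover have "\<forall>x\<in>Domain (\<Union>C). \<forall>y. (y,x) \<in> W \<longrightarrow> y \<in> Domain (\<Union>C)"
      proof (intro ballI allI impI)
        fix x y assume "x \<in> Domain (\<Union>C)" "(y,x) \<in> W"
        then obtain G where "G \<in> C" "x \<in> Domain G" by blast
        then show "y \<in> Domain (\<Union>C)" using CF Fam_def \<open>(y,x) \<in> W\<close> by blast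
      qed
      moreover have "good M D (\<Union>C)"
        using good_chain[OF fil False ch] CF Fam_def by blast
      ultimately show ?thesis unfolding Fam_def by blast
    qed
  qed
  then obtain F where FF: "F \<in> Fam" and Fmax: "\<forall>X\<in>Fam. F \<subseteq> X \<longrightarrow> X = F"
    using Zorn_Lemma by blast
  have sv: "single_valued F" and Fc: "Domain F \<subseteq> carrier M"
    and Fdown: "\<forall>x\<in>Domain F. \<forall>y. (y,x) \<in> W \<longrightarrow> y \<in> Domain F" and gF: "good M D F"
    using FF Fam_def by auto
  have dom: "Domain F = carrier M"
  proof (rule ccontr)
    assume ne: "Domain F \<noteq> carrier M"
    define B where "B = carrier M - Domain F"
    have Bne: "B \<noteq> {}" using ne Fc B_def by blast
    have BW: "B \<subseteq> Field W" using FW B_def by blast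
    define a where "a = wo_rel.minim W B"
    have aB: "a \<in> B" unfolding a_def using wo_rel.minim_in[OF _ BW Bne] WO wo_rel_def by blast
    have aleast: "(a, b) \<in> W" if "b \<in> B" for b
      unfolding a_def using wo_rel.minim_least[OF _ BW that] WO wo_rel_def by blast
    have aM: "a \<in> carrier M" and aF: "a \<notin> Domain F" using aB B_def by auto
    have sub: "Domain F \<subseteq> underS W a"
    proof
      fix x assume x: "x \<in> Domain F"
      then have "x \<in> Field W" using Fc FW by blast
      moreover have "a \<in> Field W" using aM FW by simp
      ultimately have "(x,a) \<in> W \<or> (a,x) \<in> W"
        using wo_rel.TOTALS[of W] WO wo_rel_def by blast
      moreover have "(a,x) \<notin> W" using Fdown x aF by blast
      moreover have "x \<noteq> a" using x aF by blast
      ultimately show "x \<in> underS W a" unfolding underS_def by blast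
    qed
    have "countable (underS W a)" unfolding W_def using underS_countable[OF assms(2) aM] .
    then have cnt: "countable (Domain F)" using sub countable_subset by blast
    obtain f where gf: "good M D (insert (a,f) F)" using good_extend[OF gF assms(4) cnt aM] by blast
    have "insert (a,f) F \<in> Fam"
    proof -
      have "single_valued (insert (a,f) F)" using sv aF unfolding single_valued_def by blast
      moreover have "Domain (insert (a,f) F) \<subseteq> carrier M" using Fc aM by simp
      moreover have "\<forall>x\<in>Domain (insert (a,f) F). \<forall>y. (y,x) \<in> W \<longrightarrow> y \<in> Domain (insert (a,f) F)"
      proof (intro ballI allI impI)
        fix x y assume x: "x \<in> Domain (insert (a,f) F)" and yx: "(y,x) \<in> W"
        show "y \<in> Domain (insert (a,f) F)"
        proof (cases "x = a")
          case False
          then have "x \<in> Domain F" using x by simp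
          then show ?thesis using Fdown yx by simp
        next
          case True
          show ?thesis
          proof (rule ccontr)
            assume yn: "y \<notin> Domain (insert (a,f) F)"
            have "y \<in> Field W" using yx unfolding Field_def by blast
            then have "y \<in> B" using yn FW B_def by simp
            then have "(a,y) \<in> W" using aleast by blast
            then have "y = a" using yx True WO wo_rel.ANTISYM[of W] wo_rel_def unfolding antisym_def by blast
            then show False using yn by simp
          qed
        qed
      qed
      ultimately show ?thesis using gf Fam_def by blast
    qed
    then have "insert (a,f) F = F" using Fmax by blast
    then show False using aF by blast
  qed
  define h where "h x = (SOME y. (x,y) \<in> F)" for x
  have hF: "(x, h x) \<in> F" if "x \<in> carrier M" for x
    using that dom unfolding h_def by (metis Domain_iff someI_ex)
  note GF = good_fact[OF gF sv dom fil hF]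
  have PA: "zero M \<in> carrier M" "one M \<in> carrier M"
    "\<And>x y. x \<in> carrier M \<Longrightarrow> y \<in> carrier M \<Longrightarrow> add M x y \<in> carrier M \<and> mul M x y \<in> carrier M"
    using assms(1) unfolding PA_minus_model_def by auto
  have "embeds_into_reduced_power M D h"
    unfolding embeds_into_reduced_power_def
  proof (intro conjI ballI impI)
    fix x y assume xy: "x \<in> carrier M" "y \<in> carrier M" "rp_eq D (h x) (h y)"
    show "x = y"
    proof (rule ccontr)
      assume "x \<noteq> y"
      then have X1: "{i. h x i \<noteq> h y i} \<in> D"
        by (intro GF[of "Neg (Eq (Var 0) (Var 1))" "{0,1}" "\<lambda>v. if v = 0 then x else y"]) (auto simp: xy)
      then have "{} \<in> D" using filter_int[OF fil X1 xy(3)[unfolded rp_eq_def]] by blast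
      then show False using fil is_filter_def by blast
    qed
  next
    show "rp_eq D (h (zero M)) (\<lambda>n. 0)" unfolding rp_eq_def
      by (intro GF[of "Eq (Var 0) Zero" "{0}" "\<lambda>v. zero M"]) (auto simp: PA Nat_struct_def)
  next
    show "rp_eq D (h (one M)) (\<lambda>n. 1)" unfolding rp_eq_def
      by (intro GF[of "Eq (Var 0) One" "{0}" "\<lambda>v. one M"]) (auto simp: PA Nat_struct_def)
  next
    fix x y assume xy: "x \<in> carrier M" "y \<in> carrier M"
    show "rp_eq D (h (add M x y)) (\<lambda>n. h x n + h y n)" unfolding rp_eq_def
      by (intro GF[of "Eq (Var 0) (Plus (Var 1) (Var 2))" "{0,1,2}"
            "\<lambda>v. if v = 0 then add M x y else if v = 1 then x else y"]) (auto simp: PA xy Nat_struct_def)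
  next
    fix x y assume xy: "x \<in> carrier M" "y \<in> carrier M"
    show "rp_eq D (h (mul M x y)) (\<lambda>n. h x n * h y n)" unfolding rp_eq_def
      by (intro GF[of "Eq (Var 0) (Times (Var 1) (Var 2))" "{0,1,2}"
            "\<lambda>v. if v = 0 then mul M x y else if v = 1 then x else y"]) (auto simp: PA xy Nat_struct_def)
  next
    fix x y assume xy: "x \<in> carrier M" "y \<in> carrier M"
    show "le M x y \<longleftrightarrow> rp_le D (h x) (h y)"
    proof
      assume "le M x y"
      then show "rp_le D (h x) (h y)" unfolding rp_le_def
        by (intro GF[of "Le (Var 0) (Var 1)" "{0,1}" "\<lambda>v. if v = 0 then x else y"]) (auto simp: xy Nat_struct_def)
    next
      assume le: "rp_le D (h x) (h y)"
      show "le M x y"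
      proof (rule ccontr)
        assume "\<not> le M x y"
        then have X1: "{i. \<not> h x i \<le> h y i} \<in> D"
          by (intro GF[of "Neg (Le (Var 0) (Var 1))" "{0,1}" "\<lambda>v. if v = 0 then x else y"]) (auto simp: xy Nat_struct_def)
        then have "{} \<in> D" using filter_int[OF fil X1 le[unfolded rp_le_def]] by blast
        then show False using fil is_filter_def by blast
      qed
    qed
  qed
  then show ?thesis by blast
qed

end
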